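(* Let $q$ be a primitive $n$-th root of unity. The Fourier transform $\mathcal F:{\mathfrak c}_q[SL_2]\to{\mathfrak u}_q(sl_2)$, $\mathcal F(h)=\sum_a\big(\int e_ah\big)f^a$, is invertible and given by $$\mathcal F(X^\alpha t^\beta Y^\gamma)=\sum_{l=0}^{n-1}\frac{q^{-(l+\alpha)(1-\beta)+\beta(n-1-\gamma)}}{n\,[n-1-\alpha]_{q^{-1}}!\,[n-1-\gamma]_q!}\,F^{n-1-\alpha}K^lE^{n-1-\gamma}$$ for $0\le\alpha,\beta,\gamma\le n-1$.
   Context: ${\mathfrak c}_q[SL_2]$ is the Hopf algebra generated by $X,t,Y$ with $X^n=Y^n=0$, $t^n=1$, $YX=XY$, $Xt=qtX$, $Yt=qtY$, $\Delta t=q\sum_{a=0}^{n-2}(q-1)^{a-1}(1-q^{-a-1})tY^a\otimes X^at$, $\Delta X=X\otimes1+\sum_{a=0}^{n-2}(q-1)^atY^a\otimes X^{a+1}$, $\Delta Y=1\otimes Y+\sum_{a=0}^{n-2}(1-q^{-1})^aY^{a+1}\otimes X^at$. ${\mathfrak u}_q(sl_2)$ is the Hopf algebra generated by $E,F,K$ with $E^n=F^n=0$, $K^n=1$, $KEK^{-1}=q^{-1}E$, $KFK^{-1}=qF$, $EF-FE=K-K^{-1}$, $\Delta K=K\otimes K$, $\Delta F=F\otimes1+K^{-1}\otimes F$, $\Delta E=E\otimes K+1\otimes E$. The two are dually paired by the Hopf pairing with $\langle X^it^jY^k,F^{i'}K^{j'}E^{k'}\rangle=\delta_{ii'}\delta_{kk'}q^{jj'}[i]_{q^{-1}}![k]_q!$,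 which identifies ${\mathfrak u}_q(sl_2)$ with the dual of ${\mathfrak c}_q[SL_2]$; $\{e_a\}$ is any basis of ${\mathfrak c}_q[SL_2]$ and $\{f^a\}$ the dual basis in ${\mathfrak u}_q(sl_2)$. $\int$ is the right integral on ${\mathfrak c}_q[SL_2]$ given on the basis by $\int X^\alpha t^\beta Y^\gamma=1$ if $\alpha=\gamma=n-1$, $\beta=1$, and $0$ otherwise. $[i]_q=(1-q^i)/(1-q)$, $[i]_q!=[i]_q\cdots[1]_q$. *)

theory Defs
  imports Complex_Main
begin

text \<open>Elements of c_q[SL_2] are encoded by their coordinates w.r.t. the PBW basis
  X^a t^b Y^c (0 <= a,b,c <= n-1); elements of u_q(sl_2) by their coordinates
  w.r.t. the PBW basis F^i K^j E^k (0 <= i,j,k <= n-1).\<close>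

type_synonym idx = "nat \<times> nat \<times> nat"

definition primitive_root :: "complex \<Rightarrow> nat \<Rightarrow> bool" where
  "primitive_root q n \<longleftrightarrow> n > 0 \<and> q ^ n = 1 \<and> (\<forall>k. 0 < k \<and> k < n \<longrightarrow> q ^ k \<noteq> 1)"

definition cube :: "nat \<Rightarrow> idx set" where
  "cube n = {..<n} \<times> {..<n} \<times> {..<n}"

definition space :: "nat \<Rightarrow> (idx \<Rightarrow> complex) set" where
  "space n = {u. \<forall>x. x \<notin> cube n \<longrightarrow> u x = 0}"

definition basis :: "idx \<Rightarrow> idx \<Rightarrow> complex" where
  "basis a = (\<lambda>x. if x = a then 1 else 0)"

definition qint :: "complex \<Rightarrow> nat \<Rightarrow> complex" where
  "qint q i = (1 - q ^ i) / (1 - q)"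

definition qfact :: "complex \<Rightarrow> nat \<Rightarrow> complex" where
  "qfact q i = (\<Prod>k\<in>{1..i}. qint q k)"

text \<open>Product of basis monomials in c_q[SL_2], from the relations
  X^n = Y^n = 0, t^n = 1, YX = XY, Xt = q tX, Yt = q tY:
  X^a1 t^b1 Y^c1 * X^a2 t^b2 Y^c2 = q^(c1 b2 - a2 b1) X^(a1+a2) t^(b1+b2) Y^(c1+c2).\<close>
definition cq_mult_basis :: "complex \<Rightarrow> nat \<Rightarrow> idx \<Rightarrow> idx \<Rightarrow> idx \<Rightarrow> complex" where
  "cq_mult_basis q n x y z =
     (case x of (a1, b1, c1) \<Rightarrow> case y of (a2, b2, c2) \<Rightarrow>
        if a1 + a2 < n \<and> c1 + c2 < n
        then q powi (int c1 * int b2 - int a2 * int b1) * basis (a1 + a2, (b1 + b2) mod n, c1 + c2) z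
        else 0)"

definition cq_mult :: "complex \<Rightarrow> nat \<Rightarrow> (idx \<Rightarrow> complex) \<Rightarrow> (idx \<Rightarrow> complex) \<Rightarrow> idx \<Rightarrow> complex" where
  "cq_mult q n g h = (\<lambda>z. \<Sum>x\<in>cube n. \<Sum>y\<in>cube n. g x * h y * cq_mult_basis q n x y z)"

text \<open>Right integral: \<integral> X^a t^b Y^c = 1 iff a = c = n-1, b = 1 (t^1, exponent read mod n).\<close>
definition cq_int :: "nat \<Rightarrow> (idx \<Rightarrow> complex) \<Rightarrow> complex" where
  "cq_int n h = h (n - 1, 1 mod n, n - 1)"

definition pair_basis :: "complex \<Rightarrow> idx \<Rightarrow> idx \<Rightarrow> complex" where
  "pair_basis q x y =
     (case x of (i, j, k) \<Rightarrow> case y of (i', j', k') \<Rightarrow>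
        if i = i' \<and> k = k' then q ^ (j * j') * qfact (inverse q) i * qfact q k else 0)"

definition pairing :: "complex \<Rightarrow> nat \<Rightarrow> (idx \<Rightarrow> complex) \<Rightarrow> (idx \<Rightarrow> complex) \<Rightarrow> complex" where
  "pairing q n g u = (\<Sum>x\<in>cube n. \<Sum>y\<in>cube n. g x * u y * pair_basis q x y)"

definition dual_basis :: "complex \<Rightarrow> nat \<Rightarrow> idx \<Rightarrow> idx \<Rightarrow> complex" where
  "dual_basis q n a = (THE u. u \<in> space n \<and>
      (\<forall>b\<in>cube n. pairing q n (basis b) u = (if b = a then 1 else 0)))"

definition fourier :: "complex \<Rightarrow> nat \<Rightarrow> (idx \<Rightarrow> complex) \<Rightarrow> idx \<Rightarrow> complex" where
  "fourier q n h = (\<lambda>z. \<Sum>a\<in>cube n. cq_int n (cq_mult q n (basis a) h) * dual_basis q n a z)"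

end

theory Submission
  imports Defs
begin


lemma modlem: "a2 < n \<Longrightarrow> (a2 + b) mod n = 1 mod n \<longleftrightarrow> int a2 = (1 - int b) mod int n"
proof -
  assume a: "a2 < n"
  have "(a2 + b) mod n = 1 mod n \<longleftrightarrow> int ((a2 + b) mod n) = int (1 mod n)" by linarith
  also have "\<dots> \<longleftrightarrow> (int a2 + int b) mod int n = 1 mod int n" by (simp only: of_nat_mod of_nat_add of_nat_1)
  also have "\<dots> \<longleftrightarrow> int n dvd (int a2 - (1 - int b))" by (simp add: mod_eq_dvd_iff algebra_simps)
  also have "\<dots> \<longleftrightarrow> int a2 mod int n = (1 - int b) mod int n" by (simp add: mod_eq_dvd_iff)
  also have "int a2 mod int n = int a2" using a by simp
  finally show ?thesis .
qed

definition Ex :: "nat \<Rightarrow> nat \<Rightarrow> nat \<Rightarrow> nat \<Rightarrow> nat \<Rightarrow> int" where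
  "Ex n \<alpha> \<beta> \<gamma> l = - (int l + int \<alpha>) * (1 - int \<beta>) + int \<beta> * (int n - 1 - int \<gamma>)"

definition Dn :: "complex \<Rightarrow> nat \<Rightarrow> nat \<Rightarrow> nat \<Rightarrow> complex" where
  "Dn q n \<alpha> \<gamma> = of_nat n * qfact (inverse q) (n - 1 - \<alpha>) * qfact q (n - 1 - \<gamma>)"

definition Ginv :: "complex \<Rightarrow> nat \<Rightarrow> (idx \<Rightarrow> complex) \<Rightarrow> idx \<Rightarrow> complex" where
  "Ginv q n u z = (case z of (\<alpha>,\<beta>,\<gamma>) \<Rightarrow> if (\<alpha>,\<beta>,\<gamma>) \<in> cube n then
     (\<Sum>l<n. q powi (- Ex n \<alpha> \<beta> \<gamma> l) * Dn q n \<alpha> \<gamma> * u (n - 1 - \<alpha>, l, n - 1 - \<gamma>)) / of_nat n else 0)"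

definition dualf :: "complex \<Rightarrow> nat \<Rightarrow> idx \<Rightarrow> idx \<Rightarrow> complex" where
 "dualf q n a z = (if z \<in> cube n \<and> fst z = fst a \<and> snd (snd z) = snd (snd a)
    then q powi (- (int (fst (snd a)) * int (fst (snd z)))) / (of_nat n * qfact (inverse q) (fst a) * qfact q (snd (snd a))) else 0)"

context fixes q :: complex and n :: nat assumes prim: "primitive_root q n"
begin

lemma npos: "n > 0" using prim by (simp add: primitive_root_def)
lemma qn: "q ^ n = 1" using prim by (simp add: primitive_root_def)
lemma qnz: "q \<noteq> 0" using qn npos by (metis power_0_left less_not_refl zero_neq_one)

lemma w_add: "q powi (a + b) = q powi a * q powi b"
  using qnz by (simp add: power_int_add)

lemma w_n: "q powi (int n * d) = 1"
  by (simp add: power_int_mult qn)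

lemma w_mod: "q powi a = q powi (a mod int n)"
proof -
  have "a = a mod int n + int n * (a div int n)" by simp
  then have "q powi a = q powi (a mod int n) * q powi (int n * (a div int n))"
    by (metis w_add)
  thus ?thesis by (simp add: w_n)
qed

lemma w_cong: "a mod int n = b mod int n \<Longrightarrow> q powi a = q powi b"
  by (metis w_mod)

lemma orth: "(\<Sum>l<n. q powi (int l * a)) = (if int n dvd a then of_nat n else 0)"
proof -
  have e: "q powi (int l * a) = (q powi a) ^ l" for l
    by (metis mult.commute power_int_mult power_int_of_nat)
  have "(q powi a) ^ n = 1"
    by (metis e[of n] mult.commute w_n)
  show ?thesis
  proof (cases "int n dvd a")
    case True
    then obtain d where "a = int n * d" by auto
    then have "q powi a = 1" using w_n by simp
    then show ?thesis using True by (simp add: e)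
  next
    case False
    define r where "r = a mod int n"
    have r: "0 < r" "r < int n" using False npos unfolding r_def
      by (auto simp: dvd_eq_mod_eq_0 order_le_neq_trans)
    have "q powi a = q ^ nat r" using w_mod[of a] r unfolding r_def
      by (metis order_less_imp_le power_int_of_nat int_nat_eq)
    moreover have "q ^ nat r \<noteq> 1" using prim r by (simp add: primitive_root_def)
    ultimately show ?thesis using False \<open>(q powi a) ^ n = 1\<close> by (simp add: e sum_gp_strict)
  qed
qed

lemma orth2: "y < n \<Longrightarrow> y' < n \<Longrightarrow> (\<Sum>l<n. q powi (int l * (int y' - int y))) = (if y = y' then of_nat n else 0)"
proof -
  assume a: "y < n" "y' < n"
  have "int n dvd (int y' - int y) \<longleftrightarrow> y = y'"
  proof
    assume "int n dvd (int y' - int y)"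
    then obtain d where d: "int y' - int y = int n * d" by auto
    have "\<bar>int n * d\<bar> < int n" using a d by linarith
    then have "int n * \<bar>d\<bar> < int n * 1" by (simp add: abs_mult)
    then have "\<bar>d\<bar> < 1" using mult_less_cancel_left npos by fastforce
    then have "d = 0" by simp
    with d show "y = y'" by simp
  qed simp
  thus ?thesis by (simp add: orth)
qed

lemma qfact_nz: "k < n \<Longrightarrow> qfact q k \<noteq> 0"
proof -
  assume k: "k < n"
  have "qint q j \<noteq> 0" if "1 \<le> j" "j \<le> k" for j
  proof -
    have "q ^ j \<noteq> 1" using prim that k by (simp add: primitive_root_def)
    moreover have "q ^ 1 \<noteq> 1" using prim that k unfolding primitive_root_def by (metis le_trans not_le zero_less_one le_less_trans)
    ultimately show ?thesis by (simp add: qint_def)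
  qed
  thus ?thesis by (simp add: qfact_def)
qed

lemma qfact_inv_nz: "k < n \<Longrightarrow> qfact (inverse q) k \<noteq> 0"
proof -
  assume k: "k < n"
  have "qint (inverse q) j \<noteq> 0" if "1 \<le> j" "j \<le> k" for j
  proof -
    have "q ^ j \<noteq> 1" using prim that k by (simp add: primitive_root_def)
    then have "inverse q ^ j \<noteq> 1" by (simp add: power_inverse)
    moreover have "q ^ 1 \<noteq> 1" using prim that k unfolding primitive_root_def by (metis le_trans not_le zero_less_one le_less_trans)
    then have "inverse q ^ 1 \<noteq> 1" by simp
    ultimately show ?thesis by (simp add: qint_def)
  qed
  thus ?thesis by (simp add: qfact_def)
qed

lemma sum_cube: "(\<Sum>x\<in>cube n. f x) = (\<Sum>i<n. \<Sum>j<n. \<Sum>k<n. f (i,j,k))"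
  unfolding cube_def by (simp add: sum.cartesian_product)

lemma pairing_basis: "b \<in> cube n \<Longrightarrow> pairing q n (basis b) u =
   qfact (inverse q) (fst b) * qfact q (snd (snd b)) * (\<Sum>j<n. u (fst b, j, snd (snd b)) * q ^ (fst (snd b) * j))"
proof -
  assume b: "b \<in> cube n"
  obtain b1 b2 b3 where bb: "b = (b1,b2,b3)" by (cases b) auto
  have "pairing q n (basis b) u = (\<Sum>y\<in>cube n. u y * pair_basis q b y)"
  proof -
    have eq: "(\<lambda>x. \<Sum>y\<in>cube n. basis b x * u y * pair_basis q x y) = (\<lambda>x. if x = b then \<Sum>y\<in>cube n. u y * pair_basis q x y else 0)"
      by (auto simp: basis_def)
    have fin: "finite (cube n)" by (simp add: cube_def)
    show ?thesis unfolding pairing_def eq using b fin by simp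
  qed
  also have "\<dots> = (\<Sum>i<n. \<Sum>j<n. \<Sum>k<n. u (i,j,k) * pair_basis q b (i,j,k))" by (rule sum_cube)
  also have "\<dots> = (\<Sum>j<n. u (b1, j, b3) * (q ^ (b2 * j) * qfact (inverse q) b1 * qfact q b3))"
  proof -
    have b': "b1 < n" "b3 < n" using b unfolding bb cube_def by auto
    have e1: "(\<Sum>k<n. u (i,j,k) * pair_basis q b (i,j,k)) = (if i = b1 then u (b1, j, b3) * (q ^ (b2 * j) * qfact (inverse q) b1 * qfact q b3) else 0)" for i j
      using b' unfolding bb pair_basis_def by (cases "i = b1") (auto simp: if_distrib cong: if_cong)
    have e2: "(\<Sum>j<n. if i = b1 then f j else 0) = (if i = b1 then (\<Sum>j<n. f j) else 0)" for i and f :: "nat \<Rightarrow> complex"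
      by simp
    show ?thesis unfolding e1 e2 using b' by simp
  qed
  finally show ?thesis unfolding bb by (simp add: sum_distrib_left algebra_simps)
qed

lemma invert:
  assumes h: "\<And>b. b < n \<Longrightarrow> (\<Sum>j<n. v j * q ^ (b * j)) = g b" and l: "l < n"
  shows "v l = (\<Sum>b<n. q powi (- (int b * int l)) * g b) / of_nat n"
proof -
  have "(\<Sum>b<n. q powi (- (int b * int l)) * g b) = (\<Sum>b<n. \<Sum>j<n. v j * q powi (int b * (int j - int l)))"
  proof (rule sum.cong[OF refl])
    fix b assume "b \<in> {..<n}"
    then have "g b = (\<Sum>j<n. v j * q ^ (b * j))" using h by simp
    moreover have "q powi (- (int b * int l)) * q ^ (b * j) = q powi (int b * (int j - int l))" for j
    proof -
      have "q ^ (b*j) = q powi (int b * int j)" by (metis of_nat_mult power_int_of_nat)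
      then show ?thesis using w_add[of "- (int b * int l)" "int b * int j"] by (simp add: algebra_simps)
    qed
    ultimately show "q powi (- (int b * int l)) * g b = (\<Sum>j<n. v j * q powi (int b * (int j - int l)))"
      by (simp add: sum_distrib_left algebra_simps)
  qed
  also have "\<dots> = (\<Sum>j<n. v j * (\<Sum>b<n. q powi (int b * (int j - int l))))"
    by (subst sum.swap) (simp add: sum_distrib_left)
  also have "\<dots> = (\<Sum>j<n. if l = j then v j * of_nat n else 0)"
    using l by (intro sum.cong refl) (simp add: orth2)
  also have "\<dots> = v l * of_nat n" using l by simp
  finally show ?thesis using npos by simp
qed

lemma dual_ok:
  assumes a: "a \<in> cube n" and b: "b \<in> cube n"
  shows "pairing q n (basis b) (dualf q n a) = (if b = a then 1 else 0)"
proof -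
  obtain a1 a2 a3 where aa: "a = (a1,a2,a3)" by (cases a) auto
  obtain b1 b2 b3 where bb: "b = (b1,b2,b3)" by (cases b) auto
  have ab: "a1 < n" "a2 < n" "a3 < n" "b1 < n" "b2 < n" "b3 < n" using a b aa bb by (auto simp: cube_def)
  have P: "pairing q n (basis b) (dualf q n a) = qfact (inverse q) b1 * qfact q b3 * (\<Sum>j<n. dualf q n a (b1, j, b3) * q ^ (b2 * j))"
    using pairing_basis[OF b] bb by simp
  show ?thesis
  proof (cases "b1 = a1 \<and> b3 = a3")
    case True
    define c where "c = qfact (inverse q) a1 * qfact q a3"
    have cnz: "c \<noteq> 0" using ab qfact_nz qfact_inv_nz by (simp add: c_def)
    have "(\<Sum>j<n. dualf q n a (b1, j, b3) * q ^ (b2 * j)) = (\<Sum>j<n. q powi (int j * (int b2 - int a2))) / (of_nat n * c)"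
      unfolding sum_divide_distrib
    proof (rule sum.cong[OF refl])
      fix j assume "j \<in> {..<n}"
      then have "dualf q n a (b1, j, b3) = q powi (- (int a2 * int j)) / (of_nat n * c)"
        using True ab unfolding dualf_def aa c_def by (simp add: cube_def mult.assoc)
      moreover have "q ^ (b2*j) = q powi (int j * int b2)" by (metis of_nat_mult power_int_of_nat mult.commute)
      moreover have "q powi (- (int a2 * int j)) * q powi (int j * int b2) = q powi (int j * (int b2 - int a2))"
        using w_add[of "- (int a2 * int j)" "int j * int b2"] by (simp add: algebra_simps)
      ultimately show "dualf q n a (b1, j, b3) * q ^ (b2 * j) = q powi (int j * (int b2 - int a2)) / (of_nat n * c)"
        by simp
    qed
    also have "\<dots> = (if a2 = b2 then 1 / c else 0)" using ab npos by (simp add: orth2)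
    finally show ?thesis using P True cnz aa bb unfolding c_def by auto
  next
    case False
    then have "dualf q n a (b1, j, b3) = 0" for j unfolding dualf_def aa by auto
    then show ?thesis using P False aa bb by auto
  qed
qed

lemma dual_unique:
  assumes a: "a \<in> cube n" and u: "u \<in> space n"
    and h: "\<forall>b\<in>cube n. pairing q n (basis b) u = (if b = a then 1 else 0)"
  shows "u = dualf q n a"
proof
  fix z :: idx
  obtain a1 a2 a3 where aa: "a = (a1,a2,a3)" by (cases a) auto
  obtain i l k where zz: "z = (i,l,k)" by (cases z) auto
  show "u z = dualf q n a z"
  proof (cases "z \<in> cube n")
    case False
    moreover have "u z = 0" using u False unfolding space_def by blast
    ultimately show ?thesis unfolding dualf_def by simp
  next
    case True
    then have ilk: "i < n" "l < n" "k < n" using zz by (auto simp: cube_def)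
    define c where "c = qfact (inverse q) i * qfact q k"
    have cnz: "c \<noteq> 0" using ilk qfact_nz qfact_inv_nz by (simp add: c_def)
    have H: "(\<Sum>j<n. u (i,j,k) * q ^ (b * j)) = (if (i,b,k) = a then 1 else 0) / c" if "b < n" for b
    proof -
      have "(i,b,k) \<in> cube n" using ilk that by (simp add: cube_def)
      then have "c * (\<Sum>j<n. u (i,j,k) * q ^ (b * j)) = (if (i,b,k) = a then 1 else 0)"
        using h pairing_basis[of "(i,b,k)" u] unfolding c_def by simp
      then show ?thesis using cnz by (simp add: field_simps)
    qed
    have "u (i,l,k) = (\<Sum>b<n. q powi (- (int b * int l)) * ((if (i,b,k) = a then 1 else 0) / c)) / of_nat n"
      by (rule invert[OF H ilk(2)])
    also have "\<dots> = dualf q n a z"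
    proof (cases "i = a1 \<and> k = a3")
      case True
      have "a2 < n" using a aa by (simp add: cube_def)
      then have "(\<Sum>b<n. q powi (- (int b * int l)) * ((if (i,b,k) = a then 1 else 0) / c)) = q powi (- (int a2 * int l)) / c"
      proof -
        have e: "(\<lambda>b. q powi (- (int b * int l)) * ((if (i,b,k) = a then 1 else 0) / c)) = (\<lambda>b. if b = a2 then q powi (- (int a2 * int l)) / c else 0)"
          using True aa by auto
        show ?thesis unfolding e using \<open>a2 < n\<close> by simp
      qed
      then show ?thesis using True \<open>z \<in> cube n\<close> zz aa unfolding dualf_def c_def by (simp add: field_simps)
    next
      case False
      then show ?thesis using \<open>z \<in> cube n\<close> zz aa unfolding dualf_def by auto
    qed
    finally show ?thesis using zz by simp
  qed
qed

lemma dual_basis_eq: "a \<in> cube n \<Longrightarrow> dual_basis q n a = dualf q n a"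
  unfolding dual_basis_def
proof (rule the_equality)
  assume a: "a \<in> cube n"
  show "dualf q n a \<in> space n \<and> (\<forall>b\<in>cube n. pairing q n (basis b) (dualf q n a) = (if b = a then 1 else 0))"
    using dual_ok[OF a] by (auto simp: space_def dualf_def)
  show "u = dualf q n a" if "u \<in> space n \<and> (\<forall>b\<in>cube n. pairing q n (basis b) u = (if b = a then 1 else 0))" for u
    using dual_unique[OF a] that by blast
qed

abbreviation "Zt \<equiv> (n - 1, 1 mod n, n - 1)"

lemma fin_cube: "finite (cube n)" by (simp add: cube_def)

lemma cq_int_mult: "a \<in> cube n \<Longrightarrow> cq_int n (cq_mult q n (basis a) h) = (\<Sum>y\<in>cube n. h y * cq_mult_basis q n a y Zt)"
proof -
  assume a: "a \<in> cube n"
  have eq: "(\<lambda>x. \<Sum>y\<in>cube n. basis a x * h y * cq_mult_basis q n x y Zt) = (\<lambda>x. if x = a then \<Sum>y\<in>cube n. h y * cq_mult_basis q n x y Zt else 0)"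
    by (auto simp: basis_def)
  show ?thesis unfolding cq_int_def cq_mult_def eq using a fin_cube by simp
qed

lemma fourier_lin: "fourier q n h z = (\<Sum>a\<in>cube n. \<Sum>y\<in>cube n. h y * cq_mult_basis q n a y Zt * dualf q n a z)"
  unfolding fourier_def
  by (intro sum.cong refl) (simp add: cq_int_mult dual_basis_eq sum_distrib_right)

lemma T_basis:
  assumes a: "a \<in> cube n" and y: "\<alpha> < n" "\<beta> < n" "\<gamma> < n"
  shows "cq_mult_basis q n a (\<alpha>,\<beta>,\<gamma>) Zt =
    (if a = (n - 1 - \<alpha>, nat ((1 - int \<beta>) mod int n), n - 1 - \<gamma>)
     then q powi (int (n - 1 - \<gamma>) * int \<beta> - int \<alpha> * int (nat ((1 - int \<beta>) mod int n))) else 0)"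
proof -
  obtain a1 a2 a3 where aa: "a = (a1,a2,a3)" by (cases a) auto
  have ab: "a1 < n" "a2 < n" "a3 < n" using a aa by (auto simp: cube_def)
  have "(a2 + \<beta>) mod n = 1 mod n \<longleftrightarrow> a2 = nat ((1 - int \<beta>) mod int n)"
    using modlem[OF ab(2), of \<beta>] npos by auto
  then have c: "(a1 + \<alpha> < n \<and> a3 + \<gamma> < n \<and> (a1 + \<alpha>, (a2 + \<beta>) mod n, a3 + \<gamma>) = Zt) \<longleftrightarrow>
     a = (n - 1 - \<alpha>, nat ((1 - int \<beta>) mod int n), n - 1 - \<gamma>)"
    using ab y npos aa by auto
  have d: "cq_mult_basis q n a (\<alpha>,\<beta>,\<gamma>) Zt = (if a1 + \<alpha> < n \<and> a3 + \<gamma> < n then q powi (int a3 * int \<beta> - int \<alpha> * int a2) *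
     (if Zt = (a1 + \<alpha>, (a2 + \<beta>) mod n, a3 + \<gamma>) then 1 else 0) else 0)"
    unfolding cq_mult_basis_def basis_def aa by (simp only: prod.case)
  show ?thesis
  proof (cases "a = (n - 1 - \<alpha>, nat ((1 - int \<beta>) mod int n), n - 1 - \<gamma>)")
    case True
    then have "a1 + \<alpha> < n \<and> a3 + \<gamma> < n \<and> Zt = (a1 + \<alpha>, (a2 + \<beta>) mod n, a3 + \<gamma>)" using c by (metis (no_types))
    then have C1: "a1 + \<alpha> < n \<and> a3 + \<gamma> < n" and C2: "Zt = (a1 + \<alpha>, (a2 + \<beta>) mod n, a3 + \<gamma>)" by blast+
    have "cq_mult_basis q n a (\<alpha>,\<beta>,\<gamma>) Zt = q powi (int a3 * int \<beta> - int \<alpha> * int a2)"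
      unfolding d using C1 C2 by (simp only: if_True if_P mult_1_right)
    then show ?thesis using True aa by simp
  next
    case False
    then have "\<not> (a1 + \<alpha> < n \<and> a3 + \<gamma> < n \<and> Zt = (a1 + \<alpha>, (a2 + \<beta>) mod n, a3 + \<gamma>))" using c by (metis (no_types))
    then show ?thesis unfolding d using False by (auto simp del: prod.inject)
  qed
qed

lemma fourier_basis:
  assumes y: "\<alpha> < n" "\<beta> < n" "\<gamma> < n"
  shows "fourier q n (basis (\<alpha>,\<beta>,\<gamma>)) z =
    q powi (int (n - 1 - \<gamma>) * int \<beta> - int \<alpha> * int (nat ((1 - int \<beta>) mod int n)))
    * dualf q n (n - 1 - \<alpha>, nat ((1 - int \<beta>) mod int n), n - 1 - \<gamma>) z"
proof -
  define s where "s = nat ((1 - int \<beta>) mod int n)"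
  have sn: "s < n" using npos unfolding s_def by (simp add: nat_less_iff)
  have yc: "(\<alpha>,\<beta>,\<gamma>) \<in> cube n" using y by (simp add: cube_def)
  have ac: "(n - 1 - \<alpha>, s, n - 1 - \<gamma>) \<in> cube n" using sn npos by (simp add: cube_def)
  have "fourier q n (basis (\<alpha>,\<beta>,\<gamma>)) z = (\<Sum>a\<in>cube n. cq_mult_basis q n a (\<alpha>,\<beta>,\<gamma>) Zt * dualf q n a z)"
    unfolding fourier_lin
  proof (rule sum.cong[OF refl])
    fix a
    have e: "(\<lambda>y. basis (\<alpha>, \<beta>, \<gamma>) y * cq_mult_basis q n a y Zt * dualf q n a z) = (\<lambda>y. if y = (\<alpha>,\<beta>,\<gamma>) then cq_mult_basis q n a (\<alpha>,\<beta>,\<gamma>) Zt * dualf q n a z else 0)"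
      by (auto simp: basis_def)
    show "(\<Sum>y\<in>cube n. basis (\<alpha>, \<beta>, \<gamma>) y * cq_mult_basis q n a y Zt * dualf q n a z) = cq_mult_basis q n a (\<alpha>, \<beta>, \<gamma>) Zt * dualf q n a z"
      unfolding e using yc fin_cube by simp
  qed
  also have "\<dots> = (\<Sum>a\<in>cube n. if a = (n - 1 - \<alpha>, s, n - 1 - \<gamma>) then q powi (int (n - 1 - \<gamma>) * int \<beta> - int \<alpha> * int s) * dualf q n a z else 0)"
  proof (rule sum.cong[OF refl])
    fix a assume "a \<in> cube n"
    have "cq_mult_basis q n a (\<alpha>,\<beta>,\<gamma>) Zt = (if a = (n - 1 - \<alpha>, s, n - 1 - \<gamma>) then q powi (int (n - 1 - \<gamma>) * int \<beta> - int \<alpha> * int s) else 0)"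
      using T_basis[OF \<open>a \<in> cube n\<close> y] unfolding s_def .
    then show "cq_mult_basis q n a (\<alpha>,\<beta>,\<gamma>) Zt * dualf q n a z = (if a = (n - 1 - \<alpha>, s, n - 1 - \<gamma>) then q powi (int (n - 1 - \<gamma>) * int \<beta> - int \<alpha> * int s) * dualf q n a z else 0)"
      by simp
  qed
  also have "\<dots> = q powi (int (n - 1 - \<gamma>) * int \<beta> - int \<alpha> * int s) * dualf q n (n - 1 - \<alpha>, s, n - 1 - \<gamma>) z"
    using ac fin_cube by simp
  finally show ?thesis unfolding s_def .
qed

lemma formula:
  assumes y: "\<alpha> < n" "\<beta> < n" "\<gamma> < n"
  shows "fourier q n (basis (\<alpha>, \<beta>, \<gamma>)) =
       (\<lambda>z. \<Sum>l<n.
          q powi (- (int l + int \<alpha>) * (1 - int \<beta>) + int \<beta> * (int n - 1 - int \<gamma>))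
          / (of_nat n * qfact (inverse q) (n - 1 - \<alpha>) * qfact q (n - 1 - \<gamma>))
          * basis (n - 1 - \<alpha>, l, n - 1 - \<gamma>) z)"
proof
  fix z :: idx
  obtain i m k where zz: "z = (i,m,k)" by (cases z) auto
  define s where "s = nat ((1 - int \<beta>) mod int n)"
  have si: "int s = (1 - int \<beta>) mod int n" unfolding s_def using npos by simp
  define D where "D = of_nat n * qfact (inverse q) (n - 1 - \<alpha>) * qfact q (n - 1 - \<gamma>)"
  define C where "C = (\<lambda>l::nat. q powi (- (int l + int \<alpha>) * (1 - int \<beta>) + int \<beta> * (int n - 1 - int \<gamma>)) / D)"
  have ex: "q powi (int (n - 1 - \<gamma>) * int \<beta> - int \<alpha> * int s) * q powi (- (int s * int m))
      = q powi (- (int m + int \<alpha>) * (1 - int \<beta>) + int \<beta> * (int n - 1 - int \<gamma>))"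
  proof -
    have g: "int (n - 1 - \<gamma>) = int n - 1 - int \<gamma>" using y by simp
    have "int n dvd ((1 - int \<beta>) - int s)" unfolding si by (simp add: mod_eq_dvd_iff[symmetric])
    then have "int n dvd ((int m + int \<alpha>) * ((1 - int \<beta>) - int s))" by simp
    then have "(int (n - 1 - \<gamma>) * int \<beta> - int \<alpha> * int s + - (int s * int m)) mod int n =
       (- (int m + int \<alpha>) * (1 - int \<beta>) + int \<beta> * (int n - 1 - int \<gamma>)) mod int n"
      unfolding mod_eq_dvd_iff g by (simp add: algebra_simps)
    then show ?thesis using w_cong w_add by metis
  qed
  have L: "fourier q n (basis (\<alpha>, \<beta>, \<gamma>)) z = (if i = n - 1 - \<alpha> \<and> k = n - 1 - \<gamma> \<and> m < n then C m else 0)"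
    unfolding fourier_basis[OF y] s_def[symmetric] zz dualf_def C_def D_def
    using ex npos by (auto simp: cube_def)
  have e: "(\<lambda>l. C l * basis (n - 1 - \<alpha>, l, n - 1 - \<gamma>) (i,m,k)) = (\<lambda>l. if l = m then (if i = n - 1 - \<alpha> \<and> k = n - 1 - \<gamma> then C m else 0) else 0)"
    by (auto simp: basis_def)
  have R: "(\<Sum>l<n. C l * basis (n - 1 - \<alpha>, l, n - 1 - \<gamma>) (i,m,k)) = (if i = n - 1 - \<alpha> \<and> k = n - 1 - \<gamma> \<and> m < n then C m else 0)"
    unfolding e by simp
  show "fourier q n (basis (\<alpha>, \<beta>, \<gamma>)) z = (\<Sum>l<n.
          q powi (- (int l + int \<alpha>) * (1 - int \<beta>) + int \<beta> * (int n - 1 - int \<gamma>))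
          / (of_nat n * qfact (inverse q) (n - 1 - \<alpha>) * qfact q (n - 1 - \<gamma>))
          * basis (n - 1 - \<alpha>, l, n - 1 - \<gamma>) z)"
    using L R unfolding zz C_def D_def by simp
qed

lemma delta_basis: "y \<in> cube n \<Longrightarrow> (\<Sum>y'\<in>cube n. basis y y' * f y') = f y"
proof -
  assume y: "y \<in> cube n"
  have e: "(\<lambda>y'. basis y y' * f y') = (\<lambda>y'. if y' = y then f y else 0)" by (auto simp: basis_def)
  show ?thesis unfolding e using y fin_cube by simp
qed

lemma lin: "fourier q n h z = (\<Sum>y\<in>cube n. h y * fourier q n (basis y) z)"
proof -
  have "fourier q n h z = (\<Sum>y\<in>cube n. \<Sum>a\<in>cube n. h y * (cq_mult_basis q n a y Zt * dualf q n a z))"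
    unfolding fourier_lin by (subst sum.swap) (simp add: mult.assoc)
  also have "\<dots> = (\<Sum>y\<in>cube n. h y * fourier q n (basis y) z)"
  proof (rule sum.cong[OF refl])
    fix y assume y: "y \<in> cube n"
    have "fourier q n (basis y) z = (\<Sum>a\<in>cube n. \<Sum>y'\<in>cube n. basis y y' * (cq_mult_basis q n a y' Zt * dualf q n a z))"
      unfolding fourier_lin by (simp add: mult.assoc)
    also have "\<dots> = (\<Sum>a\<in>cube n. cq_mult_basis q n a y Zt * dualf q n a z)"
      using delta_basis[OF y] by simp
    finally show "(\<Sum>a\<in>cube n. h y * (cq_mult_basis q n a y Zt * dualf q n a z)) = h y * fourier q n (basis y) z"
      by (simp add: sum_distrib_left)
  qed
  finally show ?thesis .
qed

lemma basis_pt: "\<alpha> < n \<Longrightarrow> \<beta> < n \<Longrightarrow> \<gamma> < n \<Longrightarrow> fourier q n (basis (\<alpha>,\<beta>,\<gamma>)) (i,m,k) =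
   (if i = n - 1 - \<alpha> \<and> k = n - 1 - \<gamma> \<and> m < n then q powi (Ex n \<alpha> \<beta> \<gamma> m) / Dn q n \<alpha> \<gamma> else 0)"
proof -
  assume y: "\<alpha> < n" "\<beta> < n" "\<gamma> < n"
  define C where "C = (\<lambda>l. q powi (Ex n \<alpha> \<beta> \<gamma> l) / Dn q n \<alpha> \<gamma>)"
  have e: "(\<lambda>l. C l * basis (n - 1 - \<alpha>, l, n - 1 - \<gamma>) (i,m,k)) = (\<lambda>l. if l = m then (if i = n - 1 - \<alpha> \<and> k = n - 1 - \<gamma> then C m else 0) else 0)"
    by (auto simp: basis_def)
  have "fourier q n (basis (\<alpha>,\<beta>,\<gamma>)) (i,m,k) = (\<Sum>l<n. C l * basis (n - 1 - \<alpha>, l, n - 1 - \<gamma>) (i,m,k))"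
    unfolding formula[OF y] C_def Ex_def Dn_def by simp
  also have "\<dots> = (if i = n - 1 - \<alpha> \<and> k = n - 1 - \<gamma> \<and> m < n then C m else 0)"
    unfolding e by simp
  finally show ?thesis unfolding C_def .
qed

lemma Fgen: "fourier q n h (i,m,k) = (if (i,m,k) \<in> cube n then
   (\<Sum>\<beta><n. h (n - 1 - i, \<beta>, n - 1 - k) * (q powi (Ex n (n - 1 - i) \<beta> (n - 1 - k) m) / Dn q n (n - 1 - i) (n - 1 - k))) else 0)"
proof -
  have "fourier q n h (i,m,k) = (\<Sum>\<alpha><n. \<Sum>\<beta><n. \<Sum>\<gamma><n. h (\<alpha>,\<beta>,\<gamma>) * fourier q n (basis (\<alpha>,\<beta>,\<gamma>)) (i,m,k))"
    by (subst lin) (rule sum_cube)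
  also have "\<dots> = (\<Sum>\<alpha><n. \<Sum>\<beta><n. \<Sum>\<gamma><n. if \<alpha> = n - 1 - i \<and> \<gamma> = n - 1 - k \<and> (i,m,k) \<in> cube n then
       h (\<alpha>,\<beta>,\<gamma>) * (q powi (Ex n \<alpha> \<beta> \<gamma> m) / Dn q n \<alpha> \<gamma>) else 0)"
  proof (intro sum.cong refl)
    fix \<alpha> \<beta> \<gamma> assume "\<alpha> \<in> {..<n}" "\<beta> \<in> {..<n}" "\<gamma> \<in> {..<n}"
    then have y: "\<alpha> < n" "\<beta> < n" "\<gamma> < n" by auto
    have "(i = n - 1 - \<alpha> \<and> k = n - 1 - \<gamma> \<and> m < n) \<longleftrightarrow> (\<alpha> = n - 1 - i \<and> \<gamma> = n - 1 - k \<and> (i,m,k) \<in> cube n)"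
      using y by (auto simp: cube_def)
    then show "h (\<alpha>,\<beta>,\<gamma>) * fourier q n (basis (\<alpha>,\<beta>,\<gamma>)) (i,m,k) = (if \<alpha> = n - 1 - i \<and> \<gamma> = n - 1 - k \<and> (i,m,k) \<in> cube n then
       h (\<alpha>,\<beta>,\<gamma>) * (q powi (Ex n \<alpha> \<beta> \<gamma> m) / Dn q n \<alpha> \<gamma>) else 0)"
      unfolding basis_pt[OF y] by simp
  qed
  also have "\<dots> = (if (i,m,k) \<in> cube n then
   (\<Sum>\<beta><n. h (n - 1 - i, \<beta>, n - 1 - k) * (q powi (Ex n (n - 1 - i) \<beta> (n - 1 - k) m) / Dn q n (n - 1 - i) (n - 1 - k))) else 0)"
  proof (cases "(i,m,k) \<in> cube n")
    case False then show ?thesis by simp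
  next
    case True
    then have lt: "n - 1 - i < n" "n - 1 - k < n" using npos by auto
    have e1: "(\<Sum>\<gamma><n. if \<alpha> = n - 1 - i \<and> \<gamma> = n - 1 - k \<and> (i,m,k) \<in> cube n then X \<gamma> else 0) = (if \<alpha> = n - 1 - i then X (n - 1 - k) else 0)" for \<alpha> and X :: "nat \<Rightarrow> complex"
      using True lt by (cases "\<alpha> = n - 1 - i") auto
    have e2: "(\<Sum>\<beta><n. if \<alpha> = n - 1 - i then Y \<beta> else 0) = (if \<alpha> = n - 1 - i then (\<Sum>\<beta><n. Y \<beta>) else 0)" for \<alpha> and Y :: "nat \<Rightarrow> complex"
      by simp
    show ?thesis unfolding e1 e2 using True lt by simp
  qed
  finally show ?thesis .
qed

lemma orthI: "\<beta> < n \<Longrightarrow> \<beta>' < n \<Longrightarrow>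
  (\<Sum>l<n. q powi (- Ex n \<alpha> \<beta> \<gamma> l) * q powi (Ex n \<alpha> \<beta>' \<gamma> l)) = (if \<beta> = \<beta>' then of_nat n else 0)"
proof -
  assume b: "\<beta> < n" "\<beta>' < n"
  define A where "A = (int \<alpha> + int n - 1 - int \<gamma>) * (int \<beta>' - int \<beta>)"
  have "q powi (- Ex n \<alpha> \<beta> \<gamma> l) * q powi (Ex n \<alpha> \<beta>' \<gamma> l) = q powi A * q powi (int l * (int \<beta>' - int \<beta>))" for l
  proof -
    have "- Ex n \<alpha> \<beta> \<gamma> l + Ex n \<alpha> \<beta>' \<gamma> l = A + int l * (int \<beta>' - int \<beta>)"
      unfolding Ex_def A_def by (simp add: algebra_simps)
    then show ?thesis by (metis w_add)
  qed
  then have "(\<Sum>l<n. q powi (- Ex n \<alpha> \<beta> \<gamma> l) * q powi (Ex n \<alpha> \<beta>' \<gamma> l)) = q powi A * (\<Sum>l<n. q powi (int l * (int \<beta>' - int \<beta>)))"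
    by (simp add: sum_distrib_left)
  also have "\<dots> = (if \<beta> = \<beta>' then of_nat n else 0)" using b by (simp add: orth2 A_def)
  finally show ?thesis .
qed

lemma orthII: "m < n \<Longrightarrow> l < n \<Longrightarrow>
  (\<Sum>\<beta><n. q powi (Ex n \<alpha> \<beta> \<gamma> m) * q powi (- Ex n \<alpha> \<beta> \<gamma> l)) = (if l = m then of_nat n else 0)"
proof -
  assume b: "m < n" "l < n"
  define A where "A = int l - int m"
  have "q powi (Ex n \<alpha> \<beta> \<gamma> m) * q powi (- Ex n \<alpha> \<beta> \<gamma> l) = q powi A * q powi (int \<beta> * (int m - int l))" for \<beta>
  proof -
    have "Ex n \<alpha> \<beta> \<gamma> m + - Ex n \<alpha> \<beta> \<gamma> l = A + int \<beta> * (int m - int l)"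
      unfolding Ex_def A_def by (simp add: algebra_simps)
    then show ?thesis by (metis w_add)
  qed
  then have "(\<Sum>\<beta><n. q powi (Ex n \<alpha> \<beta> \<gamma> m) * q powi (- Ex n \<alpha> \<beta> \<gamma> l)) = q powi A * (\<Sum>\<beta><n. q powi (int \<beta> * (int m - int l)))"
    by (simp add: sum_distrib_left)
  also have "\<dots> = (if l = m then of_nat n else 0)" using b by (simp add: orth2 A_def)
  finally show ?thesis .
qed

lemma Dn_nz: "\<alpha> < n \<Longrightarrow> \<gamma> < n \<Longrightarrow> Dn q n \<alpha> \<gamma> \<noteq> 0"
  unfolding Dn_def using npos qfact_nz qfact_inv_nz by simp

lemma GF: "h \<in> space n \<Longrightarrow> Ginv q n (fourier q n h) = h"
proof
  fix z :: idx
  assume h: "h \<in> space n"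
  obtain \<alpha> \<beta> \<gamma> where zz: "z = (\<alpha>,\<beta>,\<gamma>)" by (cases z) auto
  show "Ginv q n (fourier q n h) z = h z"
  proof (cases "z \<in> cube n")
    case False
    moreover have "h z = 0" using h False unfolding space_def by blast
    ultimately show ?thesis unfolding Ginv_def zz by simp
  next
    case True
    then have y: "\<alpha> < n" "\<beta> < n" "\<gamma> < n" using zz by (auto simp: cube_def)
    define D where "D = Dn q n \<alpha> \<gamma>"
    have D: "D \<noteq> 0" using Dn_nz y D_def by simp
    have F: "fourier q n h (n - 1 - \<alpha>, l, n - 1 - \<gamma>) = (\<Sum>\<beta>'<n. h (\<alpha>, \<beta>', \<gamma>) * (q powi (Ex n \<alpha> \<beta>' \<gamma> l) / D))" if "l < n" for l
    proof -
      have "(n - 1 - \<alpha>, l, n - 1 - \<gamma>) \<in> cube n" using that npos by (auto simp: cube_def)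
      moreover have "n - 1 - (n - 1 - \<alpha>) = \<alpha>" "n - 1 - (n - 1 - \<gamma>) = \<gamma>" using y by auto
      ultimately show ?thesis unfolding Fgen D_def by simp
    qed
    have "Ginv q n (fourier q n h) z = (\<Sum>l<n. q powi (- Ex n \<alpha> \<beta> \<gamma> l) * D * fourier q n h (n - 1 - \<alpha>, l, n - 1 - \<gamma>)) / of_nat n"
      unfolding Ginv_def zz D_def using True zz by simp
    also have "\<dots> = (\<Sum>l<n. \<Sum>\<beta>'<n. h (\<alpha>, \<beta>', \<gamma>) * (q powi (- Ex n \<alpha> \<beta> \<gamma> l) * q powi (Ex n \<alpha> \<beta>' \<gamma> l))) / of_nat n"
    proof (intro arg_cong[where f = "\<lambda>x. x / of_nat n"] sum.cong refl)
      fix l assume "l \<in> {..<n}"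
      then have Fl: "fourier q n h (n - 1 - \<alpha>, l, n - 1 - \<gamma>) = (\<Sum>\<beta>'<n. h (\<alpha>, \<beta>', \<gamma>) * (q powi (Ex n \<alpha> \<beta>' \<gamma> l) / D))" using F by simp
      show "q powi (- Ex n \<alpha> \<beta> \<gamma> l) * D * fourier q n h (n - 1 - \<alpha>, l, n - 1 - \<gamma>) = (\<Sum>\<beta>'<n. h (\<alpha>, \<beta>', \<gamma>) * (q powi (- Ex n \<alpha> \<beta> \<gamma> l) * q powi (Ex n \<alpha> \<beta>' \<gamma> l)))"
        unfolding Fl using D by (simp add: sum_distrib_left algebra_simps)
    qed
    also have "\<dots> = (\<Sum>\<beta>'<n. h (\<alpha>, \<beta>', \<gamma>) * (\<Sum>l<n. q powi (- Ex n \<alpha> \<beta> \<gamma> l) * q powi (Ex n \<alpha> \<beta>' \<gamma> l))) / of_nat n"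
      by (subst sum.swap) (simp add: sum_distrib_left)
    also have "\<dots> = (\<Sum>\<beta>'<n. if \<beta> = \<beta>' then h (\<alpha>, \<beta>', \<gamma>) * of_nat n else 0) / of_nat n"
      using y by (intro arg_cong[where f = "\<lambda>x. x / of_nat n"] sum.cong refl) (simp add: orthI)
    also have "\<dots> = h z" using y npos zz by simp
    finally show ?thesis .
  qed
qed

lemma FG: "u \<in> space n \<Longrightarrow> fourier q n (Ginv q n u) = u"
proof
  fix z :: idx
  assume u: "u \<in> space n"
  obtain i m k where zz: "z = (i,m,k)" by (cases z) auto
  show "fourier q n (Ginv q n u) z = u z"
  proof (cases "z \<in> cube n")
    case False
    moreover have "u z = 0" using u False unfolding space_def by blast
    ultimately show ?thesis unfolding zz Fgen by simp
  next
    case True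
    then have y: "i < n" "m < n" "k < n" using zz by (auto simp: cube_def)
    define \<alpha> where "\<alpha> = n - 1 - i"
    define \<gamma> where "\<gamma> = n - 1 - k"
    have ag: "\<alpha> < n" "\<gamma> < n" "n - 1 - \<alpha> = i" "n - 1 - \<gamma> = k" using y npos unfolding \<alpha>_def \<gamma>_def by auto
    define D where "D = Dn q n \<alpha> \<gamma>"
    have D: "D \<noteq> 0" using Dn_nz ag D_def by simp
    have G: "Ginv q n u (\<alpha>, \<beta>, \<gamma>) = (\<Sum>l<n. q powi (- Ex n \<alpha> \<beta> \<gamma> l) * D * u (i, l, k)) / of_nat n" if "\<beta> < n" for \<beta>
    proof -
      have "(\<alpha>, \<beta>, \<gamma>) \<in> cube n" using that ag by (auto simp: cube_def)
      then show ?thesis unfolding Ginv_def D_def using ag by simp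
    qed
    have "fourier q n (Ginv q n u) z = (\<Sum>\<beta><n. Ginv q n u (\<alpha>, \<beta>, \<gamma>) * (q powi (Ex n \<alpha> \<beta> \<gamma> m) / D))"
      unfolding zz Fgen using True zz unfolding \<alpha>_def \<gamma>_def D_def by simp
    also have "\<dots> = (\<Sum>\<beta><n. \<Sum>l<n. u (i, l, k) * (q powi (Ex n \<alpha> \<beta> \<gamma> m) * q powi (- Ex n \<alpha> \<beta> \<gamma> l))) / of_nat n"
      unfolding sum_divide_distrib
      using D by (intro sum.cong refl) (simp add: G sum_distrib_left sum_distrib_right sum_divide_distrib algebra_simps)
    also have "\<dots> = (\<Sum>l<n. u (i, l, k) * (\<Sum>\<beta><n. q powi (Ex n \<alpha> \<beta> \<gamma> m) * q powi (- Ex n \<alpha> \<beta> \<gamma> l))) / of_nat n"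
      by (subst sum.swap) (simp add: sum_distrib_left)
    also have "\<dots> = (\<Sum>l<n. if l = m then u (i, l, k) * of_nat n else 0) / of_nat n"
      using y by (intro arg_cong[where f = "\<lambda>x. x / of_nat n"] sum.cong refl) (simp add: orthII)
    also have "\<dots> = u z" using y npos zz by simp
    finally show ?thesis .
  qed
qed

lemma F_space: "fourier q n h \<in> space n"
  unfolding space_def
proof (clarify)
  fix i m k assume "(i,m,k) \<notin> cube n"
  then show "fourier q n h (i,m,k) = 0" unfolding Fgen by simp
qed

lemma G_space: "Ginv q n u \<in> space n"
  unfolding space_def Ginv_def by auto

lemma bij: "bij_betw (fourier q n) (space n) (space n)"
  by (rule bij_betw_byWitness[where f' = "Ginv q n"]) (auto simp: GF FG F_space G_space)

end

theorem proposition5p2: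
  fixes q :: complex and n :: nat
  assumes "primitive_root q n"
  shows "bij_betw (fourier q n) (space n) (space n) \<and>
    (\<forall>\<alpha><n. \<forall>\<beta><n. \<forall>\<gamma><n.
       fourier q n (basis (\<alpha>, \<beta>, \<gamma>)) =
       (\<lambda>z. \<Sum>l<n.
          q powi (- (int l + int \<alpha>) * (1 - int \<beta>) + int \<beta> * (int n - 1 - int \<gamma>))
          / (of_nat n * qfact (inverse q) (n - 1 - \<alpha>) * qfact q (n - 1 - \<gamma>))
          * basis (n - 1 - \<alpha>, l, n - 1 - \<gamma>) z))"
  using bij[OF assms] formula[OF assms] by blast

end
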